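(* Let $G$ be a looped simple graph, $T$ a transversal of $W(G)$, and $B$ a basis of the transverse matroid $M[IAS(G)]|T$. Let $V_B=\{v\in V(G): B\cap\tau_G(v)\neq\emptyset\}$. Then there is a looped simple graph $H$ locally equivalent to $G$ and an induced isomorphism $\beta:M[IAS(G)]\to M[IAS(H)]$ such that (1) $V(G)\setminus V_B$ is a stable set of $H$, and (2) $\beta(T)=\{\phi_H(v):v\in V_B\}\cup\bigcup_{v\in V(G)\setminus V_B}\zeta_H(v)$.
   Context: A looped simple graph is a finite graph in which each vertex carries at most one loop and no two distinct vertices are joined by more than one edge. "Adjacent"/"neighbors" refer only to distinct vertices joined by a non-loop edge; $N_G(v)$ is the set of neighbors of $v$; a stable set is a set of vertices no two of which are adjacent. $A(G)$ is the $V(G)\times V(G)$ matrix over $GF(2)$ with diagonal entry $1$ exactly at looped vertices and off-diagonal entry $1$ exactly for adjacent pairs. $IAS(G)=(I\mid A(G)\mid A(G)+I)$ over $GF(2)$, rows indexed by $V(G)$; the $v$-columns of the three blocks are labelled $\phi_G(v),\chi_G(v),\psi_G(v)$. $M[IAS(G)]$ is the binary column matroid of $IAS(G)$ on $W(G)=\{\phi_G(v),\chi_G(v),\psi_G(v):v\in V(G)\}$. The vertex triple of $v$ is $\tau_G(v)=\{\phi_G(v),\chi_G(v),\psi_G(v)\}$; a transversal meets each vertex triple in exactly one element; a transverse matroid is the restriction of $M[IAS(G)]$ to a transversal. Neighborhood circuit: $\zeta_G(v)=\{\chi_G(v)\}\cup\{\phi_G(w):w\in N_G(v)\}$ if $v$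 is unlooped, and $\{\psi_G(v)\}\cup\{\phi_G(w):w\in N_G(v)\}$ if $v$ is looped. Local equivalence: $G_\ell^v$ complements the loop status of $v$; $G_s^v$ complements the adjacency status of every pair of distinct neighbors of $v$; $G_{ns}^v$ does this and also complements the loop status of every neighbor of $v$. $H$ is locally equivalent to $G$ if obtained from $G$ by a finite sequence of such operations (so $V(H)=V(G)$). Induced isomorphisms: for each such operation producing $G'$ from $G$ there is a matroid isomorphism $M[IAS(G)]\to M[IAS(G')]$ sending $\alpha_G(x)\mapsto\alpha_{G'}(x)$ for all $\alpha\in\{\phi,\chi,\psi\}$, $x\in V(G)$, except: for $G'=G_\ell^v$, $\chi_G(v)\mapsto\psi_{G'}(v)$, $\psi_G(v)\mapsto\chi_{G'}(v)$; for $G'=G_{ns}^v$ with $v$ unlooped, $\phi_G(v)\mapsto\psi_{G'}(v)$, $\psi_G(v)\mapsto\phi_{G'}(v)$, and with $v$ looped, $\phi_G(v)\mapsto\chi_{G'}(v)$, $\chi_G(v)\mapsto\phi_{G'}(v)$; for $G'=G_s^v$, the same exchange at $v$ as for $G_{ns}^v$ and in addition, for every $w\in N_G(v)$, $\chi_G(w)\mapsto\psi_{G'}(w)$, $\psi_G(w)\mapsto\chi_{G'}(w)$. An induced isomorphism $M[IAS(G)]\to M[IAS(H)]$ is a composition of such isomorphisms along a sequence of operations transforming $G$ into $H$; it maps $\tau_G(v)$ onto $\tau_H(v)$ for every $v$. *)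

theory Defs
  imports Main
begin

record 'a lgraph =
  verts :: "'a set"
  loops :: "'a set"
  adj   :: "'a \<Rightarrow> 'a \<Rightarrow> bool"

definition looped_simple_graph :: "'a lgraph \<Rightarrow> bool" where
  "looped_simple_graph G \<longleftrightarrow>
     finite (verts G) \<and> loops G \<subseteq> verts G \<and>
     (\<forall>x y. adj G x y \<longrightarrow> x \<in> verts G \<and> y \<in> verts G \<and> x \<noteq> y) \<and>
     (\<forall>x y. adj G x y \<longleftrightarrow> adj G y x)"

definition nbhd :: "'a lgraph \<Rightarrow> 'a \<Rightarrow> 'a set" where
  "nbhd G v = {w. adj G v w}"

definition stable_set :: "'a lgraph \<Rightarrow> 'a set \<Rightarrow> bool" where
  "stable_set G S \<longleftrightarrow> S \<subseteq> verts G \<and> (\<forall>x\<in>S. \<forall>y\<in>S. \<not> adj G x y)"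

datatype 'a elt = Phi 'a | Chi 'a | Psi 'a

definition W :: "'a lgraph \<Rightarrow> 'a elt set" where
  "W G = Phi ` verts G \<union> Chi ` verts G \<union> Psi ` verts G"

definition vtriple :: "'a lgraph \<Rightarrow> 'a \<Rightarrow> 'a elt set" where
  "vtriple G v = {Phi v, Chi v, Psi v}"

text \<open>Entry of the adjacency matrix A(G) over GF(2) (True = 1).\<close>
definition Amat :: "'a lgraph \<Rightarrow> 'a \<Rightarrow> 'a \<Rightarrow> bool" where
  "Amat G w v = (if w = v then v \<in> loops G else adj G w v)"

text \<open>Column of IAS(G) labelled by an element, as a GF(2)-vector indexed by V(G)
  (entries outside V(G) are 0).\<close>
definition col :: "'a lgraph \<Rightarrow> 'a elt \<Rightarrow> 'a \<Rightarrow> bool" where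
  "col G e w = (w \<in> verts G \<and>
     (case e of Phi v \<Rightarrow> w = v
              | Chi v \<Rightarrow> Amat G w v
              | Psi v \<Rightarrow> (Amat G w v \<noteq> (w = v))))"

text \<open>Independence in the binary column matroid: no nonempty subset of the
  columns sums to zero over GF(2).\<close>
definition indep :: "'a lgraph \<Rightarrow> 'a elt set \<Rightarrow> bool" where
  "indep G S \<longleftrightarrow> S \<subseteq> W G \<and>
     (\<forall>U\<subseteq>S. U \<noteq> {} \<longrightarrow> (\<exists>w. odd (card {e\<in>U. col G e w})))"

definition transversal :: "'a lgraph \<Rightarrow> 'a elt set \<Rightarrow> bool" where
  "transversal G T \<longleftrightarrow> T \<subseteq> W G \<and> (\<forall>v\<in>verts G. card (T \<inter> vtriple G v) = 1)"

definition basis_of_restr :: "'a lgraph \<Rightarrow> 'a elt set \<Rightarrow> 'a elt set \<Rightarrow> bool" where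
  "basis_of_restr G T B \<longleftrightarrow> B \<subseteq> T \<and> indep G B \<and>
     (\<forall>x\<in>T - B. \<not> indep G (insert x B))"

definition nbhd_circuit :: "'a lgraph \<Rightarrow> 'a \<Rightarrow> 'a elt set" where
  "nbhd_circuit G v = {if v \<in> loops G then Psi v else Chi v} \<union> Phi ` nbhd G v"

definition loop_comp :: "'a lgraph \<Rightarrow> 'a \<Rightarrow> 'a lgraph" where
  "loop_comp G v = G\<lparr>loops := (if v \<in> loops G then loops G - {v} else insert v (loops G))\<rparr>"

definition s_comp :: "'a lgraph \<Rightarrow> 'a \<Rightarrow> 'a lgraph" where
  "s_comp G v = G\<lparr>adj := (\<lambda>x y. adj G x y \<noteq> (x \<noteq> y \<and> adj G v x \<and> adj G v y))\<rparr>"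

definition ns_comp :: "'a lgraph \<Rightarrow> 'a \<Rightarrow> 'a lgraph" where
  "ns_comp G v = (s_comp G v)\<lparr>loops := {x \<in> verts G. (x \<in> loops G) \<noteq> adj G v x}\<rparr>"

definition swap_chi_psi :: "'a \<Rightarrow> 'a elt \<Rightarrow> 'a elt" where
  "swap_chi_psi v e = (if e = Chi v then Psi v else if e = Psi v then Chi v else e)"

definition swap_phi_psi :: "'a \<Rightarrow> 'a elt \<Rightarrow> 'a elt" where
  "swap_phi_psi v e = (if e = Phi v then Psi v else if e = Psi v then Phi v else e)"

definition swap_phi_chi :: "'a \<Rightarrow> 'a elt \<Rightarrow> 'a elt" where
  "swap_phi_chi v e = (if e = Phi v then Chi v else if e = Chi v then Phi v else e)"

definition ns_map :: "'a lgraph \<Rightarrow> 'a \<Rightarrow> 'a elt \<Rightarrow> 'a elt" where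
  "ns_map G v = (if v \<in> loops G then swap_phi_chi v else swap_phi_psi v)"

definition s_map :: "'a lgraph \<Rightarrow> 'a \<Rightarrow> 'a elt \<Rightarrow> 'a elt" where
  "s_map G v e = (case e of
      Phi x \<Rightarrow> ns_map G v e
    | Chi x \<Rightarrow> (if adj G v x then Psi x else ns_map G v e)
    | Psi x \<Rightarrow> (if adj G v x then Chi x else ns_map G v e))"

inductive local_op :: "'a lgraph \<Rightarrow> 'a lgraph \<Rightarrow> ('a elt \<Rightarrow> 'a elt) \<Rightarrow> bool" where
  op_l:  "v \<in> verts G \<Longrightarrow> local_op G (loop_comp G v) (swap_chi_psi v)"
| op_s:  "v \<in> verts G \<Longrightarrow> local_op G (s_comp G v) (s_map G v)"
| op_ns: "v \<in> verts G \<Longrightarrow> local_op G (ns_comp G v) (ns_map G v)"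

inductive induced_iso :: "'a lgraph \<Rightarrow> 'a lgraph \<Rightarrow> ('a elt \<Rightarrow> 'a elt) \<Rightarrow> bool" where
  refl: "induced_iso G G id"
| step: "induced_iso G H \<beta> \<Longrightarrow> local_op H H' f \<Longrightarrow> induced_iso G H' (f \<circ> \<beta>)"

definition locally_equivalent :: "'a lgraph \<Rightarrow> 'a lgraph \<Rightarrow> bool" where
  "locally_equivalent H G \<longleftrightarrow> (\<exists>\<beta>. induced_iso G H \<beta>)"

end

theory Submission
  imports Defs
begin

fun vert :: "'a elt \<Rightarrow> 'a" where
  "vert (Phi x) = x" | "vert (Chi x) = x" | "vert (Psi x) = x"

lemma W_alt: "W G = {e. vert e \<in> verts G}"
  unfolding W_def by (rule set_eqI, case_tac x) auto

lemma vtriple_alt: "vtriple G v = {e. vert e = v}"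
  unfolding vtriple_def by (rule set_eqI, case_tac x) auto

lemma lop_verts: "local_op G G' f \<Longrightarrow> verts G' = verts G"
  by (induction rule: local_op.induct) (auto simp: loop_comp_def s_comp_def ns_comp_def)

lemma lop_lsg: "local_op G G' f \<Longrightarrow> looped_simple_graph G \<Longrightarrow> looped_simple_graph G'"
  by (induction rule: local_op.induct) (auto simp: looped_simple_graph_def loop_comp_def s_comp_def ns_comp_def)

lemma lop_vert: "local_op G G' f \<Longrightarrow> vert (f e) = vert e"
  by (induction rule: local_op.induct)
     (cases e; auto simp: swap_chi_psi_def s_map_def ns_map_def swap_phi_chi_def swap_phi_psi_def)+

lemma lop_invol: "local_op G G' f \<Longrightarrow> looped_simple_graph G \<Longrightarrow> f (f e) = e"
  by (induction rule: local_op.induct)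
     (cases e; auto simp: looped_simple_graph_def swap_chi_psi_def s_map_def ns_map_def swap_phi_chi_def swap_phi_psi_def)+

lemma lop_inj: "local_op G G' f \<Longrightarrow> looped_simple_graph G \<Longrightarrow> inj f"
  by (metis injI lop_invol)

lemma lop_col_l: "v \<in> verts G \<Longrightarrow> col (loop_comp G v) (swap_chi_psi v e) w = col G e w"
  by (cases e) (auto simp: col_def Amat_def loop_comp_def swap_chi_psi_def)

lemma lop_col_ns: "looped_simple_graph G \<Longrightarrow> v \<in> verts G \<Longrightarrow>
  col (ns_comp G v) (ns_map G v e) w = (col G e w \<noteq> (col G e v \<and> adj G v w))"
  by (cases e) (auto simp: looped_simple_graph_def col_def Amat_def ns_comp_def s_comp_def ns_map_def swap_phi_chi_def swap_phi_psi_def)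

lemma lop_col_s: "looped_simple_graph G \<Longrightarrow> v \<in> verts G \<Longrightarrow>
  col (s_comp G v) (s_map G v e) w = (col G e w \<noteq> (col G e v \<and> adj G v w))"
  by (cases e) (auto simp: looped_simple_graph_def col_def Amat_def s_map_def s_comp_def ns_map_def swap_phi_chi_def swap_phi_psi_def)

lemma card_filter_insert:
  "finite F \<Longrightarrow> x \<notin> F \<Longrightarrow> card {e \<in> insert x F. R e} = card {e \<in> F. R e} + (if R x then 1 else 0)"
proof -
  assume "finite F" "x \<notin> F"
  show ?thesis
  proof (cases "R x")
    case True
    then have "{e \<in> insert x F. R e} = insert x {e \<in> F. R e}" by auto
    then show ?thesis using True \<open>finite F\<close> \<open>x \<notin> F\<close> by simp
  next
    case False
    then have "{e \<in> insert x F. R e} = {e \<in> F. R e}" by auto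
    then show ?thesis using False by simp
  qed
qed

lemma parity_xor:
  "finite U \<Longrightarrow> odd (card {e\<in>U. P e \<noteq> Q e}) \<longleftrightarrow> (odd (card {e\<in>U. P e}) \<noteq> odd (card {e\<in>U. Q e}))"
proof (induction U rule: finite_induct)
  case empty then show ?case by simp
next
  case (insert x F)
  show ?case
    using card_filter_insert[OF insert.hyps(1,2), of "\<lambda>e. P e \<noteq> Q e"]
      card_filter_insert[OF insert.hyps(1,2), of P] card_filter_insert[OF insert.hyps(1,2), of Q] insert.IH
    by (cases "P x"; cases "Q x"; simp)
qed

lemma transfer_even:
  assumes "finite U" "\<And>e w. e \<in> U \<Longrightarrow> c' e w = (c e w \<noteq> (c e v \<and> a w))"
    and "\<forall>w. even (card {e\<in>U. c e w})"
  shows "\<forall>w. even (card {e\<in>U. c' e w})"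
proof
  fix w
  show "even (card {e\<in>U. c' e w})"
  proof (cases "a w")
    case True
    then have "{e\<in>U. c' e w} = {e\<in>U. c e w \<noteq> c e v}" using assms(2) by auto
    then show ?thesis using parity_xor[OF assms(1), of "\<lambda>e. c e w" "\<lambda>e. c e v"] assms(3) by auto
  next
    case False
    then have "{e\<in>U. c' e w} = {e\<in>U. c e w}" using assms(2) by auto
    then show ?thesis using assms(3) by auto
  qed
qed

definition even_all :: "'a lgraph \<Rightarrow> 'a elt set \<Rightarrow> bool" where
  "even_all G U \<longleftrightarrow> (\<forall>w. even (card {e\<in>U. col G e w}))"

lemma indep_alt: "indep G S \<longleftrightarrow> S \<subseteq> W G \<and> (\<forall>U\<subseteq>S. U \<noteq> {} \<longrightarrow> \<not> even_all G U)"
  unfolding indep_def even_all_def by auto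

lemma lsg_finite_W: "looped_simple_graph G \<Longrightarrow> finite (W G)"
  unfolding looped_simple_graph_def W_def by auto


lemma lop_col: "local_op G G' f \<Longrightarrow> looped_simple_graph G \<Longrightarrow>
   \<exists>a v. \<not> a v \<and> (\<forall>e w. col G' (f e) w = (col G e w \<noteq> (col G e v \<and> a w)))"
proof (induction rule: local_op.induct)
  case (op_l v G)
  then show ?case by (intro exI[of _ "\<lambda>_. False"]) (auto simp: lop_col_l)
next
  case (op_s v G)
  then show ?case by (intro exI[of _ "adj G v"] exI[of _ v]) (use lop_col_s[OF op_s(2,1)] op_s(2) in \<open>auto simp: looped_simple_graph_def\<close>)
next
  case (op_ns v G)
  then show ?case by (intro exI[of _ "adj G v"] exI[of _ v]) (use lop_col_ns[OF op_ns(2,1)] op_ns(2) in \<open>auto simp: looped_simple_graph_def\<close>)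
qed

lemma lop_even_all:
  assumes "local_op G G' f" "looped_simple_graph G" "finite U"
  shows "even_all G' (f ` U) \<longleftrightarrow> even_all G U"
proof -
  obtain a v where av: "\<not> a v" "\<And>e w. col G' (f e) w = (col G e w \<noteq> (col G e v \<and> a w))"
    using lop_col[OF assms(1,2)] by blast
  have inj: "inj f" using lop_inj assms by blast
  have c: "card {e\<in>f ` U. col G' e w} = card {e\<in>U. col G' (f e) w}" for w
  proof -
    have "{e\<in>f ` U. col G' e w} = f ` {e\<in>U. col G' (f e) w}" by auto
    then show ?thesis using inj by (simp add: card_image inj_on_subset)
  qed
  have bk: "col G e w = (col G' (f e) w \<noteq> (col G' (f e) v \<and> a w))" for e w
    using av by auto
  show ?thesis
    unfolding even_all_def c
    using transfer_even[OF assms(3), of "\<lambda>e w. col G' (f e) w" "\<lambda>e w. col G e w" v a]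
          transfer_even[OF assms(3), of "\<lambda>e w. col G e w" "\<lambda>e w. col G' (f e) w" v a]
          av bk by blast
qed

lemma lop_indep:
  assumes "local_op G G' f" "looped_simple_graph G" "S \<subseteq> W G"
  shows "indep G' (f ` S) \<longleftrightarrow> indep G S"
proof -
  have fin: "finite S" using assms lsg_finite_W finite_subset by blast
  have inj: "inj f" using lop_inj assms by blast
  have W: "f ` S \<subseteq> W G'" using assms lop_verts lop_vert W_alt by (smt (verit) image_subset_iff mem_Collect_eq subset_iff)
  have "(\<forall>U\<subseteq>f ` S. U \<noteq> {} \<longrightarrow> \<not> even_all G' U) \<longleftrightarrow> (\<forall>U\<subseteq>S. U \<noteq> {} \<longrightarrow> \<not> even_all G U)"
  proof
    assume h: "\<forall>U\<subseteq>f ` S. U \<noteq> {} \<longrightarrow> \<not> even_all G' U"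
    show "\<forall>U\<subseteq>S. U \<noteq> {} \<longrightarrow> \<not> even_all G U"
    proof (intro allI impI)
      fix U assume "U \<subseteq> S" "U \<noteq> {}"
      then have "\<not> even_all G' (f ` U)" using h by (metis image_is_empty image_mono)
      then show "\<not> even_all G U" using lop_even_all[OF assms(1,2)] \<open>U \<subseteq> S\<close> fin finite_subset by blast
    qed
  next
    assume h: "\<forall>U\<subseteq>S. U \<noteq> {} \<longrightarrow> \<not> even_all G U"
    show "\<forall>U\<subseteq>f ` S. U \<noteq> {} \<longrightarrow> \<not> even_all G' U"
    proof (intro allI impI)
      fix U assume "U \<subseteq> f ` S" "U \<noteq> {}"
      then obtain U0 where U0: "U0 \<subseteq> S" "U = f ` U0" by (meson subset_imageE)
      then have "U0 \<noteq> {}" using \<open>U \<noteq> {}\<close> by auto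
      then have "\<not> even_all G U0" using h U0 by auto
      then show "\<not> even_all G' U" using lop_even_all[OF assms(1,2)] U0 fin finite_subset by blast
    qed
  qed
  then show ?thesis unfolding indep_alt using W assms(3) by blast
qed

lemma ii_props:
  "induced_iso G0 H \<beta> \<Longrightarrow> looped_simple_graph G0 \<Longrightarrow>
   looped_simple_graph H \<and> verts H = verts G0 \<and> (\<forall>e. vert (\<beta> e) = vert e) \<and>
   (\<forall>S\<subseteq>W G0. indep H (\<beta> ` S) \<longleftrightarrow> indep G0 S)"
proof (induction rule: induced_iso.induct)
  case (refl G)
  then show ?case by simp
next
  case (step G H \<beta> H' f)
  then have IH: "looped_simple_graph H" "verts H = verts G" "\<forall>e. vert (\<beta> e) = vert e"
    "\<forall>S\<subseteq>W G. indep H (\<beta> ` S) = indep G S" by auto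
  have "\<forall>S\<subseteq>W G. indep H' ((f \<circ> \<beta>) ` S) = indep G S"
  proof (intro allI impI)
    fix S assume S: "S \<subseteq> W G"
    then have "\<beta> ` S \<subseteq> W H" using IH unfolding W_alt by auto
    then have "indep H' (f ` \<beta> ` S) = indep H (\<beta> ` S)" using lop_indep step(2) IH(1) by blast
    then show "indep H' ((f \<circ> \<beta>) ` S) = indep G S" using IH(4) S by (simp add: image_comp)
  qed
  then show ?case using IH lop_lsg lop_verts lop_vert step(2) by fastforce
qed

lemma find_nb:
  assumes lsg: "looped_simple_graph G" and ind: "indep G S" and cS: "c \<in> S"
    and c: "(c = Chi v \<and> v \<notin> loops G) \<or> (c = Psi v \<and> v \<in> loops G)"
  shows "\<exists>u. adj G v u \<and> Phi u \<notin> S"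
proof (rule ccontr)
  assume "\<not> ?thesis"
  then have sub: "Phi ` nbhd G v \<subseteq> S" unfolding nbhd_def by auto
  define U where "U = insert c (Phi ` nbhd G v)"
  have US: "U \<subseteq> S" "U \<noteq> {}" using sub cS U_def by auto
  have colc: "col G c w = adj G w v" for w
    using c lsg unfolding col_def Amat_def looped_simple_graph_def by auto
  have "{e\<in>U. col G e w} = (if adj G w v then {c, Phi w} else {})" for w
    using colc c lsg unfolding U_def col_def Amat_def nbhd_def looped_simple_graph_def by auto
  then have "even_all G U" unfolding even_all_def using c by auto
  then show False using ind US unfolding indep_alt by blast
qed

definition bad :: "('a elt \<Rightarrow> 'a elt) \<Rightarrow> 'a elt set \<Rightarrow> 'a elt set" where
  "bad \<beta> B = {b\<in>B. \<beta> b \<noteq> Phi (vert b)}"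

lemma fix_at:
  assumes "looped_simple_graph G0" "induced_iso G0 G \<beta>" "b \<in> B" "inj_on vert B"
    and c: "(\<beta> b = Psi (vert b) \<and> vert b \<notin> loops G) \<or> (\<beta> b = Chi (vert b) \<and> vert b \<in> loops G)"
    and v: "vert b \<in> verts G"
  shows "\<exists>G' \<beta>'. induced_iso G0 G' \<beta>' \<and> bad \<beta>' B \<subset> bad \<beta> B"
proof -
  let ?v = "vert b"
  have ii: "induced_iso G0 (ns_comp G ?v) (ns_map G ?v \<circ> \<beta>)"
    using induced_iso.step[OF assms(2) op_ns[OF v]] .
  have "bad (ns_map G ?v \<circ> \<beta>) B \<subseteq> bad \<beta> B - {b}"
  proof
    fix x assume x: "x \<in> bad (ns_map G ?v \<circ> \<beta>) B"
    show "x \<in> bad \<beta> B - {b}"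
    proof (cases "x = b")
      case True
      then show ?thesis using x c unfolding bad_def ns_map_def swap_phi_chi_def swap_phi_psi_def by auto
    next
      case False
      then have "vert x \<noteq> ?v" using assms(3,4) x unfolding bad_def inj_on_def by auto
      then show ?thesis using x False unfolding bad_def ns_map_def swap_phi_chi_def swap_phi_psi_def by (auto split: if_splits)
    qed
  qed
  moreover have "b \<in> bad \<beta> B" using c assms(3) unfolding bad_def by auto
  ultimately show ?thesis using ii by blast
qed

lemma one_step:
  assumes lsg0: "looped_simple_graph G0" and ii: "induced_iso G0 G \<beta>" and BW: "B \<subseteq> W G0"
    and ind: "indep G0 B" and inj: "inj_on vert B" and bB: "b \<in> bad \<beta> B"
  shows "\<exists>G' \<beta>'. induced_iso G0 G' \<beta>' \<and> bad \<beta>' B \<subset> bad \<beta> B"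
proof -
  have P: "looped_simple_graph G" "verts G = verts G0" "\<forall>e. vert (\<beta> e) = vert e"
    "\<forall>S\<subseteq>W G0. indep G (\<beta> ` S) \<longleftrightarrow> indep G0 S" using ii_props[OF ii lsg0] by auto
  have b: "b \<in> B" "\<beta> b \<noteq> Phi (vert b)" using bB unfolding bad_def by auto
  let ?v = "vert b"
  have v: "?v \<in> verts G" using b BW P unfolding W_alt by auto
  have vb: "vert (\<beta> b) = ?v" using P by auto
  have cases: "\<beta> b = Chi ?v \<or> \<beta> b = Psi ?v" using vb b(2) by (cases "\<beta> b") auto
  show ?thesis
  proof (cases "(\<beta> b = Psi ?v \<and> ?v \<notin> loops G) \<or> (\<beta> b = Chi ?v \<and> ?v \<in> loops G)")
    case True
    show ?thesis by (rule fix_at[OF lsg0 ii b(1) inj True v])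
  next
    case False
    then have c: "(\<beta> b = Chi ?v \<and> ?v \<notin> loops G) \<or> (\<beta> b = Psi ?v \<and> ?v \<in> loops G)"
      using cases by auto
    have indB: "indep G (\<beta> ` B)" using P(4) BW ind by auto
    obtain u where u: "adj G ?v u" "Phi u \<notin> \<beta> ` B"
      using find_nb[OF P(1) indB _ c] b(1) by blast
    have uv: "u \<in> verts G" "u \<noteq> ?v" using u P(1) unfolding looped_simple_graph_def by auto
    define G1 where "G1 = ns_comp G u"
    define \<beta>1 where "\<beta>1 = ns_map G u \<circ> \<beta>"
    have ii1: "induced_iso G0 G1 \<beta>1"
      unfolding G1_def \<beta>1_def using induced_iso.step[OF ii op_ns[OF uv(1)]] .
    have b1: "\<beta>1 b = \<beta> b" using uv(2) cases
      unfolding \<beta>1_def ns_map_def swap_phi_chi_def swap_phi_psi_def by auto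
    have loopv: "?v \<in> loops G1 \<longleftrightarrow> ?v \<notin> loops G"
      using u(1) v P(1) unfolding G1_def ns_comp_def s_comp_def looped_simple_graph_def by auto
    have v1: "?v \<in> verts G1" using v unfolding G1_def ns_comp_def s_comp_def by simp
    have c1: "(\<beta>1 b = Psi ?v \<and> ?v \<notin> loops G1) \<or> (\<beta>1 b = Chi ?v \<and> ?v \<in> loops G1)"
      using c b1 loopv by auto
    obtain G' \<beta>' where G': "induced_iso G0 G' \<beta>'" "bad \<beta>' B \<subset> bad \<beta>1 B"
      using fix_at[OF lsg0 ii1 b(1) inj c1 v1] by blast
    have "bad \<beta>1 B \<subseteq> bad \<beta> B"
    proof
      fix x assume x: "x \<in> bad \<beta>1 B"
      show "x \<in> bad \<beta> B"
      proof (rule ccontr)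
        assume nx: "x \<notin> bad \<beta> B"
        then have "\<beta> x = Phi (vert x)" using x unfolding bad_def by auto
        moreover have "vert x \<noteq> u" using calculation u(2) x unfolding bad_def by force
        ultimately have "\<beta>1 x = Phi (vert x)"
          unfolding \<beta>1_def ns_map_def swap_phi_chi_def swap_phi_psi_def by auto
        then show False using x unfolding bad_def by auto
      qed
    qed
    then show ?thesis using G' by blast
  qed
qed

lemma core:
  assumes lsg0: "looped_simple_graph G0" and BW: "B \<subseteq> W G0"
    and ind: "indep G0 B" and inj: "inj_on vert B"
  shows "\<exists>H \<beta>. induced_iso G0 H \<beta> \<and> bad \<beta> B = {}"
proof -
  have fB: "finite B" using BW lsg_finite_W[OF lsg0] finite_subset by blast
  have "\<forall>G \<beta>. induced_iso G0 G \<beta> \<longrightarrow> card (bad \<beta> B) = n \<longrightarrow> (\<exists>H \<beta>. induced_iso G0 H \<beta> \<and> bad \<beta> B = {})" for n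
  proof (induction n rule: less_induct)
    case (less n)
    show ?case
    proof (intro allI impI)
      fix G \<beta> assume ii: "induced_iso G0 G \<beta>" and cn: "card (bad \<beta> B) = n"
      show "\<exists>H \<beta>. induced_iso G0 H \<beta> \<and> bad \<beta> B = {}"
      proof (cases "bad \<beta> B = {}")
        case True then show ?thesis using ii by blast
      next
        case False
        then obtain b where "b \<in> bad \<beta> B" by blast
        then obtain G' \<beta>' where G': "induced_iso G0 G' \<beta>'" "bad \<beta>' B \<subset> bad \<beta> B"
          using one_step[OF lsg0 ii BW ind inj] by blast
        have "finite (bad \<beta> B)" using fB unfolding bad_def by simp
        then have "card (bad \<beta>' B) < n" using G'(2) cn psubset_card_mono by blast
        then show ?thesis using less G'(1) by blast
      qed
    qed
  qed
  then show ?thesis using induced_iso.refl by blast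
qed

lemma card1_eq: "card A = 1 \<Longrightarrow> x \<in> A \<Longrightarrow> y \<in> A \<Longrightarrow> x = y"
  by (metis card_1_singletonE singletonD)

theorem theorem4p3:
  fixes G :: "'a lgraph" and T B :: "'a elt set"
  assumes "looped_simple_graph G"
    and "transversal G T"
    and "basis_of_restr G T B"
  defines "VB \<equiv> {v \<in> verts G. B \<inter> vtriple G v \<noteq> {}}"
  shows "\<exists>H \<beta>. looped_simple_graph H \<and> locally_equivalent H G \<and> induced_iso G H \<beta> \<and>
           stable_set H (verts G - VB) \<and>
           \<beta> ` T = Phi ` VB \<union> (\<Union>v\<in>verts G - VB. nbhd_circuit H v)"
proof -
  note lsg = assms(1)
  have TW: "T \<subseteq> W G" and T1: "\<And>v. v \<in> verts G \<Longrightarrow> card (T \<inter> vtriple G v) = 1"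
    using assms(2) unfolding transversal_def by auto
  have BT: "B \<subseteq> T" and indB: "indep G B" and maxB: "\<And>x. x \<in> T - B \<Longrightarrow> \<not> indep G (insert x B)"
    using assms(3) unfolding basis_of_restr_def by auto
  have F1: "vert e \<in> verts G" if "e \<in> T" for e using that TW unfolding W_alt by auto
  have F2: "e = e'" if "e \<in> T" "e' \<in> T" "vert e = vert e'" for e e'
    using card1_eq[OF T1[OF F1[OF that(1)]], of e e'] that unfolding vtriple_alt by auto
  have F3: "\<exists>e\<in>T. vert e = v" if "v \<in> verts G" for v
  proof -
    have "T \<inter> vtriple G v \<noteq> {}" using T1[OF that] by auto
    then show ?thesis unfolding vtriple_alt by auto
  qed
  have VBc: "v \<in> VB \<longleftrightarrow> v \<in> verts G \<and> (\<exists>b\<in>B. vert b = v)" for v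
    unfolding VB_def vtriple_alt by auto
  have TB: "vert e \<in> VB \<longleftrightarrow> e \<in> B" if "e \<in> T" for e
    using VBc F2 BT that F1 by blast
  have BW: "B \<subseteq> W G" using BT TW by auto
  have inj: "inj_on vert B" using F2 BT unfolding inj_on_def by blast
  obtain H \<beta> where ii: "induced_iso G H \<beta>" and bd: "bad \<beta> B = {}"
    using core[OF lsg BW indB inj] by blast
  have P: "looped_simple_graph H" "verts H = verts G" "\<forall>e. vert (\<beta> e) = vert e"
    "\<forall>S\<subseteq>W G. indep H (\<beta> ` S) \<longleftrightarrow> indep G S" using ii_props[OF ii lsg] by auto
  have bPhi: "\<beta> b = Phi (vert b)" if "b \<in> B" for b using bd that unfolding bad_def by auto
  have imB: "\<beta> ` B = Phi ` VB"
  proof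
    show "\<beta> ` B \<subseteq> Phi ` VB" using bPhi VBc BW unfolding W_alt by auto
    show "Phi ` VB \<subseteq> \<beta> ` B"
    proof
      fix x assume "x \<in> Phi ` VB"
      then obtain v b where "x = Phi v" "b \<in> B" "vert b = v" using VBc by auto
      then show "x \<in> \<beta> ` B" using bPhi by force
    qed
  qed
  have VBv: "VB \<subseteq> verts G" unfolding VB_def by auto
  have K: "\<beta> e = (if v \<in> loops H then Psi v else Chi v) \<and> nbhd H v \<subseteq> VB"
    if v: "v \<in> verts G" "v \<notin> VB" and e: "e \<in> T" "vert e = v" for v e
  proof -
    define c where "c = \<beta> e"
    have eB: "e \<notin> B" using TB e v by auto
    have "\<not> indep G (insert e B)" using maxB eB e by auto
    moreover have "insert e B \<subseteq> W G" using BW e TW by auto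
    ultimately have "\<not> indep H (\<beta> ` insert e B)" using P(4) by blast
    then have ni: "\<not> indep H (insert c (Phi ` VB))" using imB c_def by simp
    have vc: "vert c = v" using P(3) e c_def by auto
    have "insert c (Phi ` VB) \<subseteq> W H" using vc v P(2) VBv unfolding W_alt by auto
    then obtain U where U: "U \<subseteq> insert c (Phi ` VB)" "U \<noteq> {}" "even_all H U"
      using ni unfolding indep_alt by blast
    have cU: "c \<in> U"
    proof (rule ccontr)
      assume "c \<notin> U"
      then have "U \<subseteq> Phi ` VB" using U by auto
      then obtain u where u: "Phi u \<in> U" "u \<in> VB" using U(2) by auto
      have colP: "col H (Phi a) w \<longleftrightarrow> w \<in> verts H \<and> w = a" for a w unfolding col_def by simp
      have uH: "u \<in> verts H" using u(2) VBv P(2) by auto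
      have "{x\<in>U. col H x u} = {Phi u}"
      proof (rule set_eqI)
        fix x
        show "x \<in> {x\<in>U. col H x u} \<longleftrightarrow> x \<in> {Phi u}"
        proof
          assume "x \<in> {x\<in>U. col H x u}"
          then obtain a where "x = Phi a" "col H x u" using \<open>U \<subseteq> Phi ` VB\<close> by blast
          then show "x \<in> {Phi u}" using colP by simp
        next
          assume "x \<in> {Phi u}"
          then show "x \<in> {x\<in>U. col H x u}" using u(1) colP uH by simp
        qed
      qed
      then have "odd (card {x\<in>U. col H x u})" by simp
      then show False using U(3) unfolding even_all_def by blast
    qed
    have nc: "\<not> col H c w" if "w \<notin> VB" for w
    proof
      assume cw: "col H c w"
      have "{x\<in>U. col H x w} = {c}"
      proof (rule set_eqI)
        fix x
        show "x \<in> {x\<in>U. col H x w} \<longleftrightarrow> x \<in> {c}"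
        proof
          assume x: "x \<in> {x\<in>U. col H x w}"
          show "x \<in> {c}"
          proof (rule ccontr)
            assume "x \<notin> {c}"
            then obtain a where "x = Phi a" "a \<in> VB" using x U(1) by blast
            then show False using x that unfolding col_def by simp
          qed
        next
          assume "x \<in> {c}"
          then show "x \<in> {x\<in>U. col H x w}" using cU cw by simp
        qed
      qed
      then have "odd (card {x\<in>U. col H x w})" by simp
      then show False using U(3) unfolding even_all_def by blast
    qed
    have ccases: "c = Phi v \<or> c = Chi v \<or> c = Psi v" using vc by (cases c) auto
    have nb: "w \<in> VB" if "w \<in> nbhd H v" and "c = Chi v \<or> c = Psi v" for w
    proof -
      have "adj H v w" using that unfolding nbhd_def by auto
      then have "col H c w" using that(2) P(1) unfolding col_def Amat_def looped_simple_graph_def by auto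
      then show ?thesis using nc by blast
    qed
    show ?thesis
    proof (cases "c = Phi v")
      case True
      then have "col H c v" using v P(2) unfolding col_def by auto
      then show ?thesis using nc v by blast
    next
      case False
      then have cc: "c = Chi v \<or> c = Psi v" using ccases by auto
      have "\<not> col H c v" using nc v by blast
      then have "c = (if v \<in> loops H then Psi v else Chi v)"
        using cc v P(2) unfolding col_def Amat_def by auto
      then show ?thesis using nb cc c_def by auto
    qed
  qed
  have stab: "stable_set H (verts G - VB)"
    unfolding stable_set_def
  proof (intro conjI ballI)
    show "verts G - VB \<subseteq> verts H" using P(2) by auto
    fix x y assume x: "x \<in> verts G - VB" and y: "y \<in> verts G - VB"
    obtain e where "e \<in> T" "vert e = x" using F3 x by auto
    then have "nbhd H x \<subseteq> VB" using K x by auto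
    then show "\<not> adj H x y" using y unfolding nbhd_def by auto
  qed
  have img: "\<beta> ` T = Phi ` VB \<union> (\<Union>v\<in>verts G - VB. nbhd_circuit H v)"
  proof
    show "\<beta> ` T \<subseteq> Phi ` VB \<union> (\<Union>v\<in>verts G - VB. nbhd_circuit H v)"
    proof
      fix x assume "x \<in> \<beta> ` T"
      then obtain e where e: "e \<in> T" "x = \<beta> e" by auto
      show "x \<in> Phi ` VB \<union> (\<Union>v\<in>verts G - VB. nbhd_circuit H v)"
      proof (cases "vert e \<in> VB")
        case True
        then show ?thesis using TB e bPhi by auto
      next
        case False
        then have "x = (if vert e \<in> loops H then Psi (vert e) else Chi (vert e))"
          using K[of "vert e" e] F1 e by auto
        then have "x \<in> nbhd_circuit H (vert e)" unfolding nbhd_circuit_def by auto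
        then show ?thesis using False F1 e by auto
      qed
    qed
    show "Phi ` VB \<union> (\<Union>v\<in>verts G - VB. nbhd_circuit H v) \<subseteq> \<beta> ` T"
    proof
      fix x assume x: "x \<in> Phi ` VB \<union> (\<Union>v\<in>verts G - VB. nbhd_circuit H v)"
      have phi: "Phi u \<in> \<beta> ` T" if uVB: "u \<in> VB" for u
      proof -
        obtain b where "b \<in> B" "vert b = u" using VBc uVB by auto
        then show ?thesis using bPhi BT by force
      qed
      show "x \<in> \<beta> ` T"
      proof (cases "x \<in> Phi ` VB")
        case True then show ?thesis using phi by auto
      next
        case False
        then obtain v where v: "v \<in> verts G" "v \<notin> VB" "x \<in> nbhd_circuit H v" using x by auto
        obtain e where e: "e \<in> T" "vert e = v" using F3 v by auto
        have Ke: "\<beta> e = (if v \<in> loops H then Psi v else Chi v)" "nbhd H v \<subseteq> VB" using K v e by auto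
        show ?thesis
        proof (cases "x = (if v \<in> loops H then Psi v else Chi v)")
          case True then show ?thesis using Ke e by (metis image_eqI)
        next
          case False
          then obtain w where "x = Phi w" "w \<in> nbhd H v" using v(3) unfolding nbhd_circuit_def by auto
          then show ?thesis using Ke phi by auto
        qed
      qed
    qed
  qed
  show ?thesis
    using P(1) ii stab img unfolding locally_equivalent_def by blast
qed

end
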